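(* Let $X=\{x_1,\dots,x_N\}\subset\mathbb{R}^d$, let $l\in\mathbb{N}$, $\Theta=[0,\pi)^{(d-1)\times l}$, and for $\boldsymbol\theta\in\Theta$ let $V(\boldsymbol\theta)\in\mathbb{R}^{d\times l}$ be the projection matrix and $P(\boldsymbol\theta)=V(\boldsymbol\theta)^\top X\in\mathbb{R}^{l\times N}$ the projected data, as defined in the context. Let $s:\mathbb{R}^{l\times N}\times\{1,\dots,N\}^2\to\mathbb{R}^+$ be a positive function such that, for each fixed $i,j\in\{1,\dots,N\}$, $P\mapsto s(P,i,j)$ is Lipschitz continuous on $\mathbb{R}^{l\times N}$. Let $L(\boldsymbol\theta)$ and $L_{\mathrm{norm}}(\boldsymbol\theta)$ be the standard and normalised graph Laplacians of the affinity matrix $A(\boldsymbol\theta)_{ij}=s(P(\boldsymbol\theta),i,j)$. Then $\boldsymbol\theta\mapsto\lambda_2(L(\boldsymbol\theta))$ and $\boldsymbol\theta\mapsto\lambda_2(L_{\mathrm{norm}}(\boldsymbol\theta))$ are Lipschitz continuous on $\Theta$.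
   Context: For $\boldsymbol\theta\in\Theta=[0,\pi)^{(d-1)\times l}$ the matrix $V(\boldsymbol\theta)\in\mathbb{R}^{d\times l}$ is defined by $V(\boldsymbol\theta)_{ij}=\cos(\boldsymbol\theta_{ij})\prod_{k=1}^{i-1}\sin(\boldsymbol\theta_{kj})$ for $i=1,\dots,d-1$ and $V(\boldsymbol\theta)_{dj}=\prod_{k=1}^{d-1}\sin(\boldsymbol\theta_{kj})$ (so each column has unit norm). The data set $X$ is viewed as the $d\times N$ matrix with columns $x_i$, and $P(\boldsymbol\theta)=V(\boldsymbol\theta)^\top X$ has columns $p(\boldsymbol\theta)_i=V(\boldsymbol\theta)^\top x_i$. For an affinity matrix $A$ with degrees $d_i=\sum_j A_{ij}$ and degree matrix $D=\mathrm{diag}(d_1,\dots,d_N)$, the standard Laplacian is $L=D-A$ and the normalised Laplacian is $L_{\mathrm{norm}}=D^{-1/2}LD^{-1/2}$. $\lambda_i(\cdot)$ denotes the $i$-th smallest eigenvalue of a real symmetric matrix. *)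

theory Defs
  imports "Jordan_Normal_Form.Char_Poly" "HOL-Computational_Algebra.Polynomial"
begin

(* Matrices are Jordan_Normal_Form matrices; indices are 0-based. *)

definition frob :: "nat \<Rightarrow> nat \<Rightarrow> real mat \<Rightarrow> real" where
  "frob m n M = sqrt (\<Sum>i<m. \<Sum>j<n. (M $$ (i,j))^2)"

definition mat_lipschitz_on :: "nat \<Rightarrow> nat \<Rightarrow> real mat set \<Rightarrow> (real mat \<Rightarrow> real) \<Rightarrow> bool" where
  "mat_lipschitz_on m n S f \<longleftrightarrow>
     (\<exists>C. \<forall>M\<in>S. \<forall>M'\<in>S. \<bar>f M - f M'\<bar> \<le> C * frob m n (M - M'))"

definition Theta :: "nat \<Rightarrow> nat \<Rightarrow> real mat set" where
  "Theta d l = {\<theta> \<in> carrier_mat (d - 1) l. \<forall>i<d - 1. \<forall>j<l. 0 \<le> \<theta> $$ (i,j) \<and> \<theta> $$ (i,j) < pi}"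

definition Vmat :: "nat \<Rightarrow> nat \<Rightarrow> real mat \<Rightarrow> real mat" where
  "Vmat d l \<theta> = mat d l (\<lambda>(i,j).
     if i < d - 1 then cos (\<theta> $$ (i,j)) * (\<Prod>k<i. sin (\<theta> $$ (k,j)))
     else (\<Prod>k<d - 1. sin (\<theta> $$ (k,j))))"

definition Pmat :: "nat \<Rightarrow> nat \<Rightarrow> real mat \<Rightarrow> real mat \<Rightarrow> real mat" where
  "Pmat d l X \<theta> = transpose_mat (Vmat d l \<theta>) * X"

definition affinity :: "nat \<Rightarrow> (real mat \<Rightarrow> nat \<Rightarrow> nat \<Rightarrow> real) \<Rightarrow> real mat \<Rightarrow> real mat" where
  "affinity N s P = mat N N (\<lambda>(i,j). s P i j)"

definition degree :: "real mat \<Rightarrow> nat \<Rightarrow> real" where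
  "degree A i = (\<Sum>j<dim_col A. A $$ (i,j))"

definition degree_mat :: "real mat \<Rightarrow> real mat" where
  "degree_mat A = mat (dim_row A) (dim_row A) (\<lambda>(i,j). if i = j then degree A i else 0)"

definition laplacian :: "real mat \<Rightarrow> real mat" where
  "laplacian A = degree_mat A - A"

definition norm_laplacian :: "real mat \<Rightarrow> real mat" where
  "norm_laplacian A =
     (let Dh = mat (dim_row A) (dim_row A) (\<lambda>(i,j). if i = j then 1 / sqrt (degree A i) else 0)
      in Dh * laplacian A * Dh)"

(* eigenvalues (roots of the characteristic polynomial, with multiplicity) in ascending order;
   lambda_k = the k-th smallest (k >= 1) *)
definition eigvals_sorted :: "real mat \<Rightarrow> real list" where
  "eigvals_sorted M = sorted_list_of_multiset (proots (char_poly M))"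

definition eig_lambda :: "nat \<Rightarrow> real mat \<Rightarrow> real" where
  "eig_lambda k M = eigvals_sorted M ! (k - 1)"

end

theory Submission
  imports Defs "HOL-Analysis.Function_Topology"
begin

definition symm :: "nat \<Rightarrow> real mat \<Rightarrow> bool" where
  "symm n A \<longleftrightarrow> (\<forall>i<n. \<forall>j<n. A $$ (i,j) = A $$ (j,i))"

lemma real_root_exists:
  fixes A :: "real mat"
  assumes A: "A \<in> carrier_mat n n" and sy: "symm n A" and n: "n > 0"
  shows "\<exists>r. poly (char_poly A) r = 0"
proof -
  define Ac where "Ac = map_mat complex_of_real A"
  have Ac: "Ac \<in> carrier_mat n n" using A unfolding Ac_def by auto
  obtain as where cp: "char_poly Ac = (\<Prod>a\<leftarrow>as. [:- a, 1:])" and len: "length as = n"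
    using char_poly_factorized[OF Ac] by blast
  then obtain a where a: "a \<in> set as" using n by (cases as) auto
  have "poly (char_poly Ac) a = 0" unfolding cp poly_prod_list
    using a by (auto simp: prod_list_zero_iff)
  hence "eigenvalue Ac a" using eigenvalue_root_char_poly[OF Ac] by simp
  then obtain v where ev: "eigenvector Ac v a" unfolding eigenvalue_def by blast
  hence v: "v \<in> carrier_vec n" and v0: "v \<noteq> 0\<^sub>v n" and Av: "Ac *\<^sub>v v = a \<cdot>\<^sub>v v"
    using Ac unfolding eigenvector_def by auto
  have row: "(\<Sum>j<n. of_real (A $$ (i,j)) * v $ j) = a * v $ i" if "i < n" for i
  proof -
    have "(Ac *\<^sub>v v) $ i = a * v $ i" using Av that v by simp
    thus ?thesis using that A v Ac unfolding Ac_def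
      by (simp add: mult_mat_vec_def scalar_prod_def atLeast0LessThan)
  qed
  define S where "S = (\<Sum>i<n. cnj (v $ i) * (\<Sum>j<n. of_real (A $$ (i,j)) * v $ j))"
  define T where "T = (\<Sum>i<n. cnj (v $ i) * v $ i)"
  have ST: "S = a * T" unfolding S_def T_def using row
    by (simp add: sum_distrib_left mult.commute mult.left_commute)
  have "cnj S = (\<Sum>i<n. v $ i * (\<Sum>j<n. of_real (A $$ (i,j)) * cnj (v $ j)))"
    unfolding S_def by (simp add: sum_distrib_left)
  also have "\<dots> = (\<Sum>i<n. \<Sum>j<n. of_real (A $$ (i,j)) * cnj (v $ j) * v $ i)"
    by (simp add: sum_distrib_left mult_ac)
  also have "\<dots> = (\<Sum>j<n. \<Sum>i<n. of_real (A $$ (i,j)) * cnj (v $ j) * v $ i)"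
    by (rule sum.swap)
  also have "\<dots> = S" unfolding S_def using sy unfolding symm_def
    by (auto simp: sum_distrib_left mult_ac intro!: sum.cong)
  finally have cS: "cnj S = S" .
  have Treal: "T = of_real (\<Sum>i<n. (cmod (v $ i))^2)" unfolding T_def
    by (simp add: complex_norm_square mult.commute del: of_real_power)
  have "\<exists>i<n. v $ i \<noteq> 0" using v v0 by (metis eq_vecI carrier_vecD index_zero_vec)
  then obtain i0 where i0: "i0 < n" "v $ i0 \<noteq> 0" by blast
  have "(\<Sum>i<n. (cmod (v $ i))^2) > 0"
    by (rule sum_pos2[of _ i0]) (use i0 in auto)
  hence T0: "T \<noteq> 0" and cT: "cnj T = T" unfolding Treal by (auto simp del: of_real_sum of_real_power)
  have aeq: "a = S / T" using ST T0 by simp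
  have "cnj a = a" unfolding aeq using cS cT by simp
  hence "a = of_real (Re a)" by (auto simp: complex_eq_iff)
  have "poly (char_poly Ac) a = 0" by fact
  hence "poly (map_poly complex_of_real (char_poly A)) (of_real (Re a)) = 0"
    unfolding Ac_def of_real_hom.char_poly_hom[OF A] using \<open>a = of_real (Re a)\<close> by simp
  hence "poly (char_poly A) (Re a) = 0" by simp
  thus ?thesis by blast
qed

definition ext :: "real \<Rightarrow> nat \<Rightarrow> real mat \<Rightarrow> real mat" where
  "ext a n M = mat (Suc n) (Suc n) (\<lambda>(i,j). if i = 0 then (if j = 0 then a else 0)
      else if j = 0 then 0 else M $$ (i - 1, j - 1))"

lemma ext_carrier[simp]: "ext a n M \<in> carrier_mat (Suc n) (Suc n)"
  unfolding ext_def by simp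

lemma ext_index: "i < Suc n \<Longrightarrow> j < Suc n \<Longrightarrow> ext a n M $$ (i,j) =
   (if i = 0 then (if j = 0 then a else 0) else if j = 0 then 0 else M $$ (i - 1, j - 1))"
  unfolding ext_def by simp

lemma ext_mult:
  assumes "M \<in> carrier_mat n n" "M' \<in> carrier_mat n n"
  shows "ext a n M * ext b n M' = ext (a*b) n (M * M')"
proof (rule eq_matI)
  fix i j assume i: "i < dim_row (ext (a*b) n (M * M'))" and j: "j < dim_col (ext (a*b) n (M * M'))"
  hence i': "i < Suc n" and j': "j < Suc n" by (auto simp: ext_def)
  have "(ext a n M * ext b n M') $$ (i,j) = (\<Sum>k\<in>{0..<Suc n}. ext a n M $$ (i,k) * ext b n M' $$ (k,j))"
    using i' j' by (simp add: ext_def scalar_prod_def)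
  also have "\<dots> = ext a n M $$ (i,0) * ext b n M' $$ (0,j)
       + (\<Sum>k\<in>{0..<n}. ext a n M $$ (i,Suc k) * ext b n M' $$ (Suc k,j))"
    by (simp add: sum.atLeast0_lessThan_Suc_shift del: sum.op_ivl_Suc)
  also have "\<dots> = ext (a*b) n (M * M') $$ (i,j)"
  proof (cases i)
    case 0 then show ?thesis using j' by (simp add: ext_index)
  next
    case (Suc i0)
    show ?thesis
    proof (cases j)
      case 0 then show ?thesis using i' Suc by (simp add: ext_index)
    next
      case (Suc j0)
      have "(M * M') $$ (i0, j0) = (\<Sum>k\<in>{0..<n}. M $$ (i0,k) * M' $$ (k,j0))"
        using assms i' j' \<open>i = Suc i0\<close> Suc by (simp add: scalar_prod_def)
      then show ?thesis using i' j' \<open>i = Suc i0\<close> Suc by (simp add: ext_index)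
    qed
  qed
  finally show "(ext a n M * ext b n M') $$ (i,j) = ext (a*b) n (M * M') $$ (i,j)" .
qed (auto simp: ext_def)

lemma ext_transpose: "M \<in> carrier_mat n n \<Longrightarrow> transpose_mat (ext a n M) = ext a n (transpose_mat M)"
  by (rule eq_matI) (auto simp: ext_def)

lemma ext_one: "ext 1 n (1\<^sub>m n) = 1\<^sub>m (Suc n)"
  by (rule eq_matI) (auto simp: ext_def)

definition diagm :: "real list \<Rightarrow> real mat" where
  "diagm ds = mat (length ds) (length ds) (\<lambda>(i,j). if i = j then ds ! i else 0)"

lemma diagm_carrier[simp]: "diagm ds \<in> carrier_mat (length ds) (length ds)"
  unfolding diagm_def by simp

lemma diagm_Cons: "diagm (a # ds) = ext a (length ds) (diagm ds)"
  by (rule eq_matI) (auto simp: ext_def diagm_def nth_Cons')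

lemma symm_transpose: "A \<in> carrier_mat n n \<Longrightarrow> symm n A \<longleftrightarrow> transpose_mat A = A"
  unfolding symm_def by (auto intro!: eq_matI) (metis carrier_matD index_transpose_mat(1))

lemma cp_decomp:
  assumes A: "A \<in> carrier_mat n n" and U: "U \<in> carrier_mat n n"
    and UtU: "transpose_mat U * U = 1\<^sub>m n" and UUt: "U * transpose_mat U = 1\<^sub>m n"
    and len: "length ds = n" and AU: "A * U = U * diagm ds"
  shows "char_poly A = (\<Prod>d\<leftarrow>ds. [:- d, 1:])"
proof -
  have D: "diagm ds \<in> carrier_mat n n" using len by auto
  have Ut: "transpose_mat U \<in> carrier_mat n n" using U by auto
  have "A = A * (U * transpose_mat U)" using A UUt by simp
  also have "\<dots> = (A * U) * transpose_mat U" using A U Ut by simp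
  also have "\<dots> = U * diagm ds * transpose_mat U" unfolding AU ..
  finally have eq: "A = U * diagm ds * transpose_mat U" .
  have "similar_mat A (diagm ds)"
    by (rule similar_matI[OF _ UUt UtU eq]) (use A U Ut D in auto)
  hence "char_poly A = char_poly (diagm ds)" by (rule char_poly_similar)
  also have "\<dots> = (\<Prod>a\<leftarrow>diag_mat (diagm ds). [:- a, 1:])"
    by (rule char_poly_upper_triangular[OF D]) (auto simp: upper_triangular_def diagm_def)
  also have "diag_mat (diagm ds) = ds"
    by (auto simp: diag_mat_def diagm_def intro!: nth_equalityI)
  finally show ?thesis .
qed

lemma householder:
  fixes w :: "real vec"
  assumes w: "w \<in> carrier_vec m" and ww: "w \<bullet> w = 1" and m: "m > 0"
  shows "\<exists>H \<in> carrier_mat m m. transpose_mat H = H \<and> H * H = 1\<^sub>m m \<and> (\<forall>i<m. H $$ (i,0) = w $ i)"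
proof -
  define u where "u k = w $ k - (if k = 0 then 1 else 0)" for k
  define S where "S = (\<Sum>k<m. (u k)^2)"
  define c where "c = 2 / S"
  define H where "H = mat m m (\<lambda>(i,j). (if i = j then 1 else 0) - c * u i * u j)"
  have Hc: "H \<in> carrier_mat m m" unfolding H_def by simp
  have HT: "transpose_mat H = H" unfolding H_def by (rule eq_matI) auto
  have key: "(\<Sum>k<m. ((if i = k then 1 else 0) - c * u i * u k) * ((if k = j then 1 else 0) - c * u k * u j))
      = (if i = j then 1 else 0) - 2 * c * u i * u j + c^2 * u i * u j * S" if "i < m" "j < m" for i j
  proof -
    have "(\<Sum>k<m. ((if i = k then 1 else 0) - c * u i * u k) * ((if k = j then 1 else 0) - c * u k * u j))
      = (\<Sum>k<m. (if k = i then (if i = j then 1 else 0) else 0))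
        - (\<Sum>k<m. (if i = k then c * u k * u j else 0))
        - (\<Sum>k<m. (if k = j then c * u i * u k else 0))
        + (\<Sum>k<m. c^2 * u i * u j * (u k)^2)"
    proof -
      have "((if i = k then 1 else 0) - c * u i * u k) * ((if k = j then 1 else 0) - c * u k * u j)
        = (if k = i then (if i = j then 1 else 0) else 0)
          - (if i = k then c * u k * u j else 0) - (if k = j then c * u i * u k else 0)
          + c^2 * u i * u j * (u k)^2" for k
        by (auto simp: algebra_simps power2_eq_square)
      thus ?thesis by (simp add: sum.distrib sum_subtractf)
    qed
    also have "\<dots> = (if i = j then 1 else 0) - 2 * c * u i * u j + c^2 * u i * u j * S"
      using that by (simp add: S_def sum_distrib_left)
    finally show ?thesis .
  qed
  have cS: "- 2 * c + c^2 * S = 0"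
  proof (cases "S = 0")
    case True thus ?thesis by (simp add: c_def)
  next
    case False thus ?thesis by (simp add: c_def power2_eq_square field_simps)
  qed
  have HH: "H * H = 1\<^sub>m m"
  proof (rule eq_matI)
    fix i j assume "i < dim_row (1\<^sub>m m)" "j < dim_col (1\<^sub>m m)"
    hence ij: "i < m" "j < m" by auto
    have "(H * H) $$ (i,j) = (\<Sum>k<m. H $$ (i,k) * H $$ (k,j))"
      using ij Hc by (simp add: scalar_prod_def atLeast0LessThan)
    also have "\<dots> = (\<Sum>k<m. ((if i = k then 1 else 0) - c * u i * u k) * ((if k = j then 1 else 0) - c * u k * u j))"
      using ij by (intro sum.cong) (auto simp: H_def)
    also have "\<dots> = (if i = j then 1 else 0) + u i * u j * (- 2 * c + c^2 * S)"
      using key[OF ij] by (simp add: algebra_simps)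
    also have "\<dots> = 1\<^sub>m m $$ (i,j)" using cS ij by simp
    finally show "(H * H) $$ (i,j) = 1\<^sub>m m $$ (i,j)" .
  qed (use Hc in auto)
  have ww': "(\<Sum>k<m. (w $ k)^2) = 1" using ww w
    by (simp add: scalar_prod_def atLeast0LessThan power2_eq_square)
  have col0: "H $$ (i,0) = w $ i" if i: "i < m" for i
  proof (cases "S = 0")
    case True
    hence "\<forall>k\<in>{..<m}. (u k)^2 = 0" unfolding S_def by (subst sum_nonneg_eq_0_iff[symmetric]) auto
    hence "u i = 0" using i by auto
    thus ?thesis using i m by (simp add: H_def c_def True u_def)
  next
    case False
    have "S = (\<Sum>k<m. (w $ k)^2) - 2 * w $ 0 + 1"
    proof -
      have "S = (\<Sum>k<m. (w $ k)^2 - 2 * (if k = 0 then w $ k else 0) + (if k = 0 then 1 else 0))"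
        unfolding S_def u_def by (intro sum.cong) (auto simp: power2_eq_square algebra_simps)
      also have "\<dots> = (\<Sum>k<m. (w $ k)^2) - 2 * w $ 0 + 1"
        using m by (simp add: sum.distrib sum_subtractf sum_distrib_left[symmetric])
      finally show ?thesis .
    qed
    hence S2: "S = 2 - 2 * w $ 0" using ww' by simp
    have "c * u 0 = -1" using False S2 by (simp add: c_def u_def field_simps)
    hence "c * u i * u 0 = - u i"
      by (metis (no_types, lifting) mult.commute mult.left_commute mult_minus1_right)
    thus ?thesis using i m by (simp add: H_def u_def)
  qed
  show ?thesis using Hc HT HH col0 by blast
qed

theorem spectral:
  fixes A :: "real mat"
  assumes "A \<in> carrier_mat n n" "symm n A"
  shows "\<exists>U ds. U \<in> carrier_mat n n \<and> transpose_mat U * U = 1\<^sub>m n \<and> U * transpose_mat U = 1\<^sub>m n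
     \<and> length ds = n \<and> sorted ds \<and> A * U = U * diagm ds"
  using assms
proof (induction n arbitrary: A)
  case 0
  show ?case
    by (rule exI[of _ "1\<^sub>m 0"], rule exI[of _ "[]"]) (use 0 in \<open>auto intro!: eq_matI simp: diagm_def\<close>)
next
  case (Suc n A)
  note A = Suc.prems(1)
  have sA: "transpose_mat A = A" using Suc.prems symm_transpose by blast
  let ?p = "char_poly A"
  have p0: "?p \<noteq> 0" using degree_monic_char_poly[OF A] by auto
  define R where "R = {r. poly ?p r = 0}"
  have finR: "finite R" unfolding R_def using poly_roots_finite[OF p0] .
  have neR: "R \<noteq> {}" unfolding R_def using real_root_exists[OF A Suc.prems(2)] by auto
  define \<mu> where "\<mu> = Min R"
  have muR: "\<mu> \<in> R" unfolding \<mu>_def using finR neR by simp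
  have mu_le: "\<And>r. r \<in> R \<Longrightarrow> \<mu> \<le> r" unfolding \<mu>_def using finR by simp
  have "eigenvalue A \<mu>" using muR eigenvalue_root_char_poly[OF A] unfolding R_def by simp
  then obtain v where "eigenvector A v \<mu>" unfolding eigenvalue_def by blast
  hence v: "v \<in> carrier_vec (Suc n)" and v0: "v \<noteq> 0\<^sub>v (Suc n)" and Av: "A *\<^sub>v v = \<mu> \<cdot>\<^sub>v v"
    using A unfolding eigenvector_def by auto
  have vv: "v \<bullet> v > 0"
  proof -
    have "\<exists>i<Suc n. v $ i \<noteq> 0" using v v0 by (metis eq_vecI carrier_vecD index_zero_vec)
    then obtain i0 where i0: "i0 < Suc n" "v $ i0 \<noteq> 0" by blast
    have "v \<bullet> v = (\<Sum>i<Suc n. (v $ i)^2)" using v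
      by (simp add: scalar_prod_def atLeast0LessThan power2_eq_square)
    also have "\<dots> > 0" by (rule sum_pos2[of _ i0]) (use i0 in auto)
    finally show ?thesis .
  qed
  define w where "w = (1 / sqrt (v \<bullet> v)) \<cdot>\<^sub>v v"
  have w: "w \<in> carrier_vec (Suc n)" unfolding w_def using v by simp
  have ww: "w \<bullet> w = 1" unfolding w_def using v vv
    by (simp add: power2_eq_square[symmetric])
  have Aw: "A *\<^sub>v w = \<mu> \<cdot>\<^sub>v w" unfolding w_def using A v Av
    by (simp add: mult_mat_vec smult_smult_assoc mult.commute)
  obtain H where H: "H \<in> carrier_mat (Suc n) (Suc n)" and HT: "transpose_mat H = H"
    and HH: "H * H = 1\<^sub>m (Suc n)" and Hcol: "\<forall>i<Suc n. H $$ (i,0) = w $ i"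
    using householder[OF w ww] by auto
  define e0 :: "real vec" where "e0 = unit_vec (Suc n) 0"
  have e0: "e0 \<in> carrier_vec (Suc n)" unfolding e0_def by simp
  have He0: "H *\<^sub>v e0 = w"
    by (rule eq_vecI) (use H w Hcol in \<open>auto simp: e0_def\<close>)
  define B where "B = H * A * H"
  have B: "B \<in> carrier_mat (Suc n) (Suc n)" unfolding B_def using H A by simp
  have BT: "transpose_mat B = B"
  proof -
    have AH: "A * H \<in> carrier_mat (Suc n) (Suc n)" using A H by simp
    have "transpose_mat B = transpose_mat (H * (A * H))" unfolding B_def using A H by simp
    also have "\<dots> = transpose_mat (A * H) * transpose_mat H" by (rule transpose_mult[OF H AH])
    also have "transpose_mat (A * H) = transpose_mat H * transpose_mat A" by (rule transpose_mult[OF A H])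
    finally show ?thesis unfolding HT sA B_def using H A by simp
  qed
  have Be0: "B *\<^sub>v e0 = \<mu> \<cdot>\<^sub>v e0"
  proof -
    have "B *\<^sub>v e0 = H *\<^sub>v (A *\<^sub>v (H *\<^sub>v e0))" unfolding B_def using H A e0
      assoc_mult_mat_vec[of H "Suc n" "Suc n" "A*H" "Suc n" e0]
      assoc_mult_mat_vec[of A "Suc n" "Suc n" H "Suc n" e0] by simp
    also have "\<dots> = \<mu> \<cdot>\<^sub>v (H *\<^sub>v w)" unfolding He0 Aw using H w by (simp add: mult_mat_vec)
    also have "H *\<^sub>v w = (H * H) *\<^sub>v e0" unfolding He0[symmetric] using H e0 by simp
    also have "\<dots> = e0" unfolding HH using e0 by simp
    finally show ?thesis .
  qed
  have Bcol: "B $$ (i,0) = (if i = 0 then \<mu> else 0)" if "i < Suc n" for i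
  proof -
    have "(B *\<^sub>v e0) $ i = B $$ (i,0)" using B that by (simp add: e0_def)
    hence "\<mu> * (if i = 0 then 1 else 0) = B $$ (i,0)" using Be0 that by (simp add: e0_def)
    thus ?thesis by (cases "i = 0") auto
  qed
  define B3 where "B3 = mat n n (\<lambda>(i,j). B $$ (Suc i, Suc j))"
  have B3: "B3 \<in> carrier_mat n n" unfolding B3_def by simp
  have BB3: "B = ext \<mu> n B3"
  proof (rule eq_matI)
    fix i j assume "i < dim_row (ext \<mu> n B3)" "j < dim_col (ext \<mu> n B3)"
    hence ij: "i < Suc n" "j < Suc n" by (auto simp: ext_def)
    have sym: "B $$ (i,j) = B $$ (j,i)" using BT ij B
      by (metis carrier_matD index_transpose_mat(1))
    show "B $$ (i,j) = ext \<mu> n B3 $$ (i,j)"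
      using ij Bcol sym Bcol[of j] by (auto simp: ext_index B3_def)
  qed (use B in \<open>auto simp: ext_def\<close>)
  have sB3: "symm n B3" unfolding symm_def B3_def using BT B
    by (auto, metis Suc_mono carrier_matD index_transpose_mat(1))
  obtain U3 ds3 where U3: "U3 \<in> carrier_mat n n" and U3a: "transpose_mat U3 * U3 = 1\<^sub>m n"
    and U3b: "U3 * transpose_mat U3 = 1\<^sub>m n" and len3: "length ds3 = n" and sort3: "sorted ds3"
    and BU3: "B3 * U3 = U3 * diagm ds3"
    using Suc.IH[OF B3 sB3] by blast
  define E where "E = ext 1 n U3"
  have E: "E \<in> carrier_mat (Suc n) (Suc n)" unfolding E_def by simp
  define U where "U = H * E"
  have U: "U \<in> carrier_mat (Suc n) (Suc n)" unfolding U_def using H E by simp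
  have ET: "transpose_mat E = ext 1 n (transpose_mat U3)" unfolding E_def using U3 ext_transpose by blast
  have UT: "transpose_mat U = transpose_mat E * H" unfolding U_def using H E HT
    by (simp add: transpose_mult[of _ "Suc n" "Suc n"])
  have EtE: "transpose_mat E * E = 1\<^sub>m (Suc n)" unfolding ET
    using ext_mult[of "transpose_mat U3" n U3 1 1] U3 U3a ext_one by (simp add: E_def)
  have EEt: "E * transpose_mat E = 1\<^sub>m (Suc n)" unfolding ET
    using ext_mult[of U3 n "transpose_mat U3" 1 1] U3 U3b ext_one by (simp add: E_def)
  have Et: "transpose_mat E \<in> carrier_mat (Suc n) (Suc n)" using E by simp
  have UtU: "transpose_mat U * U = 1\<^sub>m (Suc n)"
  proof -
    have "transpose_mat U * U = (transpose_mat E * H) * (H * E)" using UT by (simp add: U_def)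
    also have "\<dots> = transpose_mat E * (H * H) * E"
      using assoc_mult_mat[OF Et H mult_carrier_mat[OF H E]]
        assoc_mult_mat[OF Et mult_carrier_mat[OF H H] E] assoc_mult_mat[OF H H E] by simp
    finally show ?thesis using HH EtE Et by simp
  qed
  have UUt: "U * transpose_mat U = 1\<^sub>m (Suc n)"
  proof -
    have "U * transpose_mat U = (H * E) * (transpose_mat E * H)" using UT by (simp add: U_def)
    also have "\<dots> = H * (E * transpose_mat E) * H"
      using assoc_mult_mat[OF H E mult_carrier_mat[OF Et H]]
        assoc_mult_mat[OF H mult_carrier_mat[OF E Et] H] assoc_mult_mat[OF E Et H] by simp
    finally show ?thesis using HH EEt H by simp
  qed
  define ds where "ds = \<mu> # ds3"
  have len: "length ds = Suc n" unfolding ds_def using len3 by simp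
  have D: "diagm ds = ext \<mu> n (diagm ds3)" unfolding ds_def diagm_Cons len3 ..
  have HB: "H * B = A * H"
  proof -
    have "H * B = H * ((H * A) * H)" unfolding B_def ..
    also have "\<dots> = (H * (H * A)) * H"
      using assoc_mult_mat[OF H mult_carrier_mat[OF H A] H] by simp
    also have "H * (H * A) = (H * H) * A" using assoc_mult_mat[OF H H A] by simp
    finally show ?thesis using HH A by simp
  qed
  have BE: "B * E = E * diagm ds"
  proof -
    have "B * E = ext \<mu> n (B3 * U3)" unfolding BB3 E_def using ext_mult[OF B3 U3] by simp
    also have "\<dots> = ext \<mu> n (U3 * diagm ds3)" unfolding BU3 ..
    also have "\<dots> = E * diagm ds" unfolding D E_def using ext_mult[of U3 n "diagm ds3" 1 \<mu>] U3 diagm_carrier[of ds3, unfolded len3]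
      by simp
    finally show ?thesis .
  qed
  have AU: "A * U = U * diagm ds"
  proof -
    have Dc: "diagm ds \<in> carrier_mat (Suc n) (Suc n)" using len by (metis diagm_carrier)
    have "A * U = (A * H) * E" unfolding U_def using A H E by simp
    also have "\<dots> = H * (B * E)" unfolding HB[symmetric] using H B E by simp
    also have "\<dots> = U * diagm ds" unfolding BE U_def using H E Dc by simp
    finally show ?thesis .
  qed
  have cp: "?p = (\<Prod>d\<leftarrow>ds. [:- d, 1:])" by (rule cp_decomp[OF A U UtU UUt len AU])
  have "\<forall>x\<in>set ds3. \<mu> \<le> x"
  proof
    fix x assume "x \<in> set ds3"
    hence "poly ?p x = 0" unfolding cp ds_def poly_prod_list by (auto simp: prod_list_zero_iff)
    thus "\<mu> \<le> x" using mu_le unfolding R_def by auto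
  qed
  hence "sorted ds" unfolding ds_def using sort3 by simp
  thus ?case using U UtU UUt len AU by blast
qed

lemma eigvals_decomp:
  assumes A: "A \<in> carrier_mat n n" and U: "U \<in> carrier_mat n n"
    and UtU: "transpose_mat U * U = 1\<^sub>m n" and UUt: "U * transpose_mat U = 1\<^sub>m n"
    and len: "length ds = n" and srt: "sorted ds" and AU: "A * U = U * diagm ds"
  shows "eigvals_sorted A = ds"
proof -
  have cp: "char_poly A = (\<Prod>d\<leftarrow>ds. [:- d, 1:])" by (rule cp_decomp[OF A U UtU UUt len AU])
  have "proots (\<Prod>d\<leftarrow>ds. [:- d, 1:]) = mset ds"
  proof (induction ds)
    case Nil then show ?case by simp
  next
    case (Cons a ds)
    have "proots (\<Prod>d\<leftarrow>a # ds. [:- d, 1:]) = proots ([:- a, 1:] * (\<Prod>d\<leftarrow>ds. [:- d, 1:]))" by simp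
    also have "\<dots> = proots [:- a, 1:] + proots (\<Prod>d\<leftarrow>ds. [:- d, 1:])"
      by (rule proots_mult) (auto simp: prod_list_zero_iff)
    also have "proots [:- a, 1:] = {#a#}" using proots_linear_factor[of "-a"] by simp
    finally show ?case using Cons by simp
  qed
  thus ?thesis unfolding eigvals_sorted_def cp using srt by (simp add: sorted_sort_id)
qed

lemma quad_form:
  fixes A U :: "real mat"
  assumes A: "A \<in> carrier_mat n n" and U: "U \<in> carrier_mat n n"
    and UtU: "transpose_mat U * U = 1\<^sub>m n"
    and len: "length ds = n" and AU: "A * U = U * diagm ds"
    and y: "y \<in> carrier_vec n"
  shows "(U *\<^sub>v y) \<bullet> (A *\<^sub>v (U *\<^sub>v y)) = (\<Sum>i<n. ds ! i * (y $ i)^2)"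
    and "(U *\<^sub>v y) \<bullet> (U *\<^sub>v y) = (\<Sum>i<n. (y $ i)^2)"
proof -
  let ?x = "U *\<^sub>v y"
  have x: "?x \<in> carrier_vec n" using U y by simp
  have D: "diagm ds \<in> carrier_mat n n" using len by (metis diagm_carrier)
  have Ut: "transpose_mat U \<in> carrier_mat n n" using U by simp
  have UtUy: "transpose_mat U *\<^sub>v ?x = y"
    using assoc_mult_mat_vec[OF Ut U y] UtU y by simp
  have "?x \<bullet> (A *\<^sub>v ?x) = ?x \<bullet> ((A * U) *\<^sub>v y)" using A U y by simp
  also have "\<dots> = ?x \<bullet> (U *\<^sub>v (diagm ds *\<^sub>v y))" unfolding AU using U D y by simp
  also have "\<dots> = (transpose_mat U *\<^sub>v ?x) \<bullet> (diagm ds *\<^sub>v y)"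
    using transpose_vec_mult_scalar[OF U _ x, of "diagm ds *\<^sub>v y"] D y by simp
  also have "\<dots> = y \<bullet> (diagm ds *\<^sub>v y)" unfolding UtUy ..
  also have "\<dots> = (\<Sum>i<n. ds ! i * (y $ i)^2)"
  proof -
    have "(diagm ds *\<^sub>v y) $ i = ds ! i * y $ i" if "i < n" for i
    proof -
      have "(diagm ds *\<^sub>v y) $ i = (\<Sum>j\<in>{0..<n}. (if i = j then ds ! i else 0) * y $ j)"
        using that len y by (simp add: diagm_def scalar_prod_def row_def)
      also have "\<dots> = (\<Sum>j\<in>{0..<n}. (if j = i then ds ! i * y $ i else 0))"
        by (intro sum.cong) auto
      also have "\<dots> = ds ! i * y $ i" using that by simp
      finally show ?thesis .
    qed
    thus ?thesis using y D by (simp add: scalar_prod_def atLeast0LessThan power2_eq_square mult_ac)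
  qed
  finally show "?x \<bullet> (A *\<^sub>v ?x) = (\<Sum>i<n. ds ! i * (y $ i)^2)" .
  have "?x \<bullet> ?x = (transpose_mat U *\<^sub>v ?x) \<bullet> y"
    using transpose_vec_mult_scalar[OF U y x] by simp
  also have "\<dots> = (\<Sum>i<n. (y $ i)^2)" unfolding UtUy using y
    by (simp add: scalar_prod_def atLeast0LessThan power2_eq_square)
  finally show "?x \<bullet> ?x = (\<Sum>i<n. (y $ i)^2)" .
qed

lemma frob_entry: "i < m \<Longrightarrow> j < n \<Longrightarrow> \<bar>M $$ (i,j)\<bar> \<le> frob m n M"
proof -
  assume ij: "i < m" "j < n"
  have "(M $$ (i,j))^2 \<le> (\<Sum>j'<n. (M $$ (i,j'))^2)"
    using ij by (intro member_le_sum) auto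
  also have "\<dots> \<le> (\<Sum>i'<m. \<Sum>j'<n. (M $$ (i',j'))^2)"
    using ij by (intro member_le_sum) (auto intro: sum_nonneg)
  finally show ?thesis unfolding frob_def using real_sqrt_le_mono real_sqrt_abs by metis
qed

lemma quad_bound:
  fixes E :: "real mat"
  assumes E: "E \<in> carrier_mat n n" and x: "x \<in> carrier_vec n"
  shows "x \<bullet> (E *\<^sub>v x) \<le> real n * frob n n E * (x \<bullet> x)"
proof -
  let ?F = "frob n n E"
  have F0: "?F \<ge> 0" unfolding frob_def by (auto intro!: sum_nonneg)
  have "x \<bullet> (E *\<^sub>v x) = (\<Sum>i<n. \<Sum>j<n. E $$ (i,j) * x $ i * x $ j)"
    using E x by (simp add: scalar_prod_def atLeast0LessThan sum_distrib_left mult_ac)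
  also have "\<dots> \<le> (\<Sum>i<n. \<Sum>j<n. ?F * (((x $ i)^2 + (x $ j)^2) / 2))"
  proof (intro sum_mono)
    fix i j assume ij: "i \<in> {..<n}" "j \<in> {..<n}"
    have "E $$ (i,j) * x $ i * x $ j \<le> \<bar>E $$ (i,j)\<bar> * \<bar>x $ i * x $ j\<bar>"
      by (metis abs_ge_self abs_mult mult.assoc)
    also have "\<dots> \<le> ?F * (((x $ i)^2 + (x $ j)^2) / 2)"
    proof (rule mult_mono)
      show "\<bar>E $$ (i,j)\<bar> \<le> ?F" using ij frob_entry by auto
      have "0 \<le> (\<bar>x $ i\<bar> - \<bar>x $ j\<bar>)^2" by simp
      thus "\<bar>x $ i * x $ j\<bar> \<le> ((x $ i)^2 + (x $ j)^2) / 2"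
        by (simp add: power2_eq_square algebra_simps abs_mult)
    qed (use F0 in auto)
    finally show "E $$ (i,j) * x $ i * x $ j \<le> ?F * (((x $ i)^2 + (x $ j)^2) / 2)" .
  qed
  also have "\<dots> = ?F / 2 * (\<Sum>i<n. \<Sum>j<n. (x $ i)^2 + (x $ j)^2)"
    by (simp add: sum_distrib_left sum_divide_distrib)
  also have "(\<Sum>i<n. \<Sum>j<n. (x $ i)^2 + (x $ j)^2) = 2 * real n * (\<Sum>i<n. (x $ i)^2)"
    by (simp add: sum.distrib sum_distrib_left[symmetric] sum.swap[of _ "{..<n}" "{..<n}"] algebra_simps)
  also have "(\<Sum>i<n. (x $ i)^2) = x \<bullet> x" using x
    by (simp add: scalar_prod_def atLeast0LessThan power2_eq_square)
  finally show ?thesis by (simp add: algebra_simps)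
qed

lemma sum_two:
  fixes n :: nat and F :: "nat \<Rightarrow> real \<Rightarrow> real"
  assumes n: "n \<ge> 2" and F0: "\<And>k. F k 0 = 0"
  shows "(\<Sum>k<n. F k (if k = 0 then a else if k = 1 then b else 0)) = F 0 a + F 1 (b::real)"
proof -
  have "(\<Sum>k<n. F k (if k = 0 then a else if k = 1 then b else 0))
      = (\<Sum>k<n. (if k = 0 then F 0 a else 0) + (if k = 1 then F 1 b else 0))"
    by (intro sum.cong) (auto simp: F0)
  also have "\<dots> = F 0 a + F 1 b" using n by (simp add: sum.distrib)
  finally show ?thesis .
qed

lemma weyl2:
  fixes A B :: "real mat"
  assumes A: "A \<in> carrier_mat n n" and B: "B \<in> carrier_mat n n"
    and sA: "symm n A" and sB: "symm n B" and n: "n \<ge> 2"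
  shows "eig_lambda 2 B \<le> eig_lambda 2 A + real n * frob n n (B - A)"
proof -
  obtain U ds where U: "U \<in> carrier_mat n n" and UtU: "transpose_mat U * U = 1\<^sub>m n"
    and UUt: "U * transpose_mat U = 1\<^sub>m n" and lenA: "length ds = n" and srtA: "sorted ds"
    and AU: "A * U = U * diagm ds" using spectral[OF A sA] by blast
  obtain V es where V: "V \<in> carrier_mat n n" and VtV: "transpose_mat V * V = 1\<^sub>m n"
    and VVt: "V * transpose_mat V = 1\<^sub>m n" and lenB: "length es = n" and srtB: "sorted es"
    and BV: "B * V = V * diagm es" using spectral[OF B sB] by blast
  have eA: "eig_lambda 2 A = ds ! 1"
    unfolding eig_lambda_def eigvals_decomp[OF A U UtU UUt lenA srtA AU] by simp
  have eB: "eig_lambda 2 B = es ! 1"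
    unfolding eig_lambda_def eigvals_decomp[OF B V VtV VVt lenB srtB BV] by simp
  have Vt: "transpose_mat V \<in> carrier_mat n n" using V by simp
  define C where "C = transpose_mat V * U"
  have Cc: "C \<in> carrier_mat n n" unfolding C_def using V U by simp
  define a where "a = (if C $$ (0,0) = 0 \<and> C $$ (0,1) = 0 then 1 else C $$ (0,1))"
  define b where "b = (if C $$ (0,0) = 0 \<and> C $$ (0,1) = 0 then 0 else - C $$ (0,0))"
  have ab: "a^2 + b^2 > 0" unfolding a_def b_def by (auto simp: sum_power2_gt_zero_iff)
  have Cab: "C $$ (0,0) * a + C $$ (0,1) * b = 0" unfolding a_def b_def by auto
  define y :: "real vec" where "y = vec n (\<lambda>i. if i = 0 then a else if i = 1 then b else 0)"
  have y: "y \<in> carrier_vec n" unfolding y_def by simp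
  define x where "x = U *\<^sub>v y"
  have x: "x \<in> carrier_vec n" unfolding x_def using U y by simp
  define z where "z = transpose_mat V *\<^sub>v x"
  have z: "z \<in> carrier_vec n" unfolding z_def using Vt x by simp
  have xz: "V *\<^sub>v z = x" unfolding z_def using assoc_mult_mat_vec[OF V Vt x] VVt x by simp
  have z0: "z $ 0 = 0"
  proof -
    have "z = C *\<^sub>v y" unfolding z_def x_def C_def using assoc_mult_mat_vec[OF Vt U y] by simp
    hence "z $ 0 = (\<Sum>k<n. C $$ (0,k) * y $ k)" using Cc y n
      by (simp add: scalar_prod_def atLeast0LessThan row_def)
    also have "\<dots> = (\<Sum>k<n. C $$ (0,k) * (if k = 0 then a else if k = 1 then b else 0))"
      by (intro sum.cong) (auto simp: y_def)
    also have "\<dots> = C $$ (0,0) * a + C $$ (0,1) * b"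
      by (rule sum_two[OF n, of "\<lambda>k v. C $$ (0,k) * v"]) simp
    finally show ?thesis using Cab by simp
  qed
  have qA: "x \<bullet> (A *\<^sub>v x) = ds ! 0 * a^2 + ds ! 1 * b^2"
  proof -
    have "x \<bullet> (A *\<^sub>v x) = (\<Sum>i<n. ds ! i * (y $ i)^2)"
      unfolding x_def by (rule quad_form(1)[OF A U UtU lenA AU y])
    also have "\<dots> = (\<Sum>i<n. ds ! i * (if i = 0 then a else if i = 1 then b else 0)^2)"
      by (intro sum.cong) (auto simp: y_def)
    also have "\<dots> = ds ! 0 * a^2 + ds ! 1 * b^2"
      by (rule sum_two[OF n, of "\<lambda>k v. ds ! k * v^2"]) simp
    finally show ?thesis .
  qed
  have xxA: "x \<bullet> x = a^2 + b^2"
  proof -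
    have "x \<bullet> x = (\<Sum>i<n. (y $ i)^2)"
      unfolding x_def by (rule quad_form(2)[OF A U UtU lenA AU y])
    also have "\<dots> = (\<Sum>i<n. (if i = 0 then a else if i = 1 then b else 0)^2)"
      by (intro sum.cong) (auto simp: y_def)
    also have "\<dots> = a^2 + b^2"
      by (rule sum_two[OF n, of "\<lambda>k v. v^2"]) simp
    finally show ?thesis .
  qed
  have qB: "x \<bullet> (B *\<^sub>v x) = (\<Sum>i<n. es ! i * (z $ i)^2)"
    using quad_form(1)[OF B V VtV lenB BV z] unfolding xz .
  have xxB: "x \<bullet> x = (\<Sum>i<n. (z $ i)^2)"
    using quad_form(2)[OF B V VtV lenB BV z] unfolding xz .
  have "es ! 1 * (x \<bullet> x) = (\<Sum>i<n. es ! 1 * (z $ i)^2)" unfolding xxB by (simp add: sum_distrib_left)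
  also have "\<dots> \<le> (\<Sum>i<n. es ! i * (z $ i)^2)"
  proof (rule sum_mono)
    fix i assume i: "i \<in> {..<n}"
    show "es ! 1 * (z $ i)^2 \<le> es ! i * (z $ i)^2"
    proof (cases "i = 0")
      case True thus ?thesis using z0 by simp
    next
      case False
      hence "es ! 1 \<le> es ! i" using i lenB srtB by (intro sorted_nth_mono) auto
      thus ?thesis by (intro mult_right_mono) auto
    qed
  qed
  also have "\<dots> = x \<bullet> (B *\<^sub>v x)" unfolding qB ..
  also have "\<dots> = x \<bullet> (A *\<^sub>v x) + x \<bullet> ((B - A) *\<^sub>v x)"
    using minus_mult_distrib_mat_vec[OF B A x] scalar_prod_minus_distrib[of x n "B *\<^sub>v x" "A *\<^sub>v x"]
      x A B by simp
  also have "\<dots> \<le> ds ! 1 * (x \<bullet> x) + real n * frob n n (B - A) * (x \<bullet> x)"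
  proof (rule add_mono)
    have "ds ! 0 \<le> ds ! 1" using lenA srtA n by (intro sorted_nth_mono) auto
    hence "ds ! 0 * a^2 \<le> ds ! 1 * a^2" by (intro mult_right_mono) auto
    thus "x \<bullet> (A *\<^sub>v x) \<le> ds ! 1 * (x \<bullet> x)" unfolding qA xxA by (simp add: algebra_simps)
    show "x \<bullet> ((B - A) *\<^sub>v x) \<le> real n * frob n n (B - A) * (x \<bullet> x)"
      by (rule quad_bound) (use A B x in auto)
  qed
  finally have "es ! 1 * (x \<bullet> x) \<le> (ds ! 1 + real n * frob n n (B - A)) * (x \<bullet> x)"
    by (simp add: algebra_simps)
  moreover have "x \<bullet> x > 0" unfolding xxA by (rule ab)
  ultimately have "es ! 1 \<le> ds ! 1 + real n * frob n n (B - A)" by simp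
  thus ?thesis unfolding eA eB .
qed

lemma frob_minus_sym: "frob m n (A - B) = frob m n (B - A)" if "A \<in> carrier_mat m n" "B \<in> carrier_mat m n"
  unfolding frob_def using that by (auto intro!: arg_cong[where f=sqrt] sum.cong simp: power2_commute)

lemma weyl2_abs:
  fixes A B :: "real mat"
  assumes A: "A \<in> carrier_mat n n" and B: "B \<in> carrier_mat n n"
    and sA: "symm n A" and sB: "symm n B" and n: "n \<ge> 2"
  shows "\<bar>eig_lambda 2 A - eig_lambda 2 B\<bar> \<le> real n * frob n n (A - B)"
  using weyl2[OF A B sA sB n] weyl2[OF B A sB sA n] unfolding frob_minus_sym[OF A B] by linarith

lemma frob_nonneg: "frob m n M \<ge> 0"
  unfolding frob_def by (auto intro!: sum_nonneg)

definition lipS :: "nat \<Rightarrow> nat \<Rightarrow> real mat set \<Rightarrow> (real mat \<Rightarrow> real) \<Rightarrow> bool" where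
  "lipS m n S f \<longleftrightarrow> mat_lipschitz_on m n S f \<and> (\<exists>B. \<forall>x\<in>S. \<bar>f x\<bar> \<le> B)"

lemma mat_lipD:
  assumes "mat_lipschitz_on m n S f"
  obtains C where "C \<ge> 0" "\<And>x y. x \<in> S \<Longrightarrow> y \<in> S \<Longrightarrow> \<bar>f x - f y\<bar> \<le> C * frob m n (x - y)"
proof -
  obtain C where C: "\<forall>x\<in>S. \<forall>y\<in>S. \<bar>f x - f y\<bar> \<le> C * frob m n (x - y)"
    using assms unfolding mat_lipschitz_on_def by blast
  show ?thesis
  proof (rule that[of "\<bar>C\<bar>"])
    fix x y assume "x \<in> S" "y \<in> S"
    hence "\<bar>f x - f y\<bar> \<le> C * frob m n (x - y)" using C by blast
    also have "\<dots> \<le> \<bar>C\<bar> * frob m n (x - y)" using frob_nonneg by (intro mult_right_mono) auto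
    finally show "\<bar>f x - f y\<bar> \<le> \<bar>C\<bar> * frob m n (x - y)" .
  qed simp
qed

lemma lipSD:
  assumes "lipS m n S f"
  obtains C B where "C \<ge> 0" "B \<ge> 0" "\<And>x y. x \<in> S \<Longrightarrow> y \<in> S \<Longrightarrow> \<bar>f x - f y\<bar> \<le> C * frob m n (x - y)"
    "\<And>x. x \<in> S \<Longrightarrow> \<bar>f x\<bar> \<le> B"
proof -
  obtain C where C: "C \<ge> 0" "\<And>x y. x \<in> S \<Longrightarrow> y \<in> S \<Longrightarrow> \<bar>f x - f y\<bar> \<le> C * frob m n (x - y)"
    using assms unfolding lipS_def by (auto elim: mat_lipD)
  obtain B where B: "\<forall>x\<in>S. \<bar>f x\<bar> \<le> B" using assms unfolding lipS_def by blast
  show ?thesis by (rule that[of C "\<bar>B\<bar>"]) (use C B in \<open>auto intro: order_trans\<close>)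
qed

lemma mat_lipI: "(\<And>x y. x \<in> S \<Longrightarrow> y \<in> S \<Longrightarrow> \<bar>f x - f y\<bar> \<le> C * frob m n (x - y)) \<Longrightarrow> mat_lipschitz_on m n S f"
  unfolding mat_lipschitz_on_def by blast

lemma lipS_const: "lipS m n S (\<lambda>_. c)"
  unfolding lipS_def by (auto intro!: mat_lipI[of _ _ 0] simp: frob_nonneg)

lemma lipS_add: assumes "lipS m n S f" "lipS m n S g" shows "lipS m n S (\<lambda>x. f x + g x)"
proof -
  obtain C1 B1 where 1: "C1 \<ge> 0" "B1 \<ge> 0" "\<And>x y. x \<in> S \<Longrightarrow> y \<in> S \<Longrightarrow> \<bar>f x - f y\<bar> \<le> C1 * frob m n (x - y)"
    "\<And>x. x \<in> S \<Longrightarrow> \<bar>f x\<bar> \<le> B1" using assms(1) by (rule lipSD) blast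
  obtain C2 B2 where 2: "C2 \<ge> 0" "B2 \<ge> 0" "\<And>x y. x \<in> S \<Longrightarrow> y \<in> S \<Longrightarrow> \<bar>g x - g y\<bar> \<le> C2 * frob m n (x - y)"
    "\<And>x. x \<in> S \<Longrightarrow> \<bar>g x\<bar> \<le> B2" using assms(2) by (rule lipSD) blast
  have "mat_lipschitz_on m n S (\<lambda>x. f x + g x)"
  proof (rule mat_lipI[of _ _ "C1 + C2"])
    fix x y assume "x \<in> S" "y \<in> S"
    hence "\<bar>f x - f y\<bar> + \<bar>g x - g y\<bar> \<le> C1 * frob m n (x - y) + C2 * frob m n (x - y)"
      using 1 2 by (intro add_mono) auto
    thus "\<bar>f x + g x - (f y + g y)\<bar> \<le> (C1 + C2) * frob m n (x - y)" by (simp add: algebra_simps)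
  qed
  moreover have "\<forall>x\<in>S. \<bar>f x + g x\<bar> \<le> B1 + B2"
  proof
    fix x assume x: "x \<in> S"
    show "\<bar>f x + g x\<bar> \<le> B1 + B2" using abs_triangle_ineq[of "f x" "g x"] 1(4)[OF x] 2(4)[OF x] by linarith
  qed
  ultimately show ?thesis unfolding lipS_def by blast
qed

lemma lipS_neg: assumes "lipS m n S f" shows "lipS m n S (\<lambda>x. - f x)"
  using assms unfolding lipS_def mat_lipschitz_on_def by (auto simp: abs_minus_commute)

lemma lipS_diff: assumes "lipS m n S f" "lipS m n S g" shows "lipS m n S (\<lambda>x. f x - g x)"
  using lipS_add[OF assms(1) lipS_neg[OF assms(2)]] by simp

lemma lipS_mult: assumes "lipS m n S f" "lipS m n S g" shows "lipS m n S (\<lambda>x. f x * g x)"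
proof -
  obtain C1 B1 where 1: "C1 \<ge> 0" "B1 \<ge> 0" "\<And>x y. x \<in> S \<Longrightarrow> y \<in> S \<Longrightarrow> \<bar>f x - f y\<bar> \<le> C1 * frob m n (x - y)"
    "\<And>x. x \<in> S \<Longrightarrow> \<bar>f x\<bar> \<le> B1" using assms(1) by (rule lipSD) blast
  obtain C2 B2 where 2: "C2 \<ge> 0" "B2 \<ge> 0" "\<And>x y. x \<in> S \<Longrightarrow> y \<in> S \<Longrightarrow> \<bar>g x - g y\<bar> \<le> C2 * frob m n (x - y)"
    "\<And>x. x \<in> S \<Longrightarrow> \<bar>g x\<bar> \<le> B2" using assms(2) by (rule lipSD) blast
  have "mat_lipschitz_on m n S (\<lambda>x. f x * g x)"
  proof (rule mat_lipI[of _ _ "B1 * C2 + B2 * C1"])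
    fix x y assume xy: "x \<in> S" "y \<in> S"
    have "f x * g x - f y * g y = f x * (g x - g y) + g y * (f x - f y)" by (simp add: algebra_simps)
    hence "\<bar>f x * g x - f y * g y\<bar> \<le> \<bar>f x\<bar> * \<bar>g x - g y\<bar> + \<bar>g y\<bar> * \<bar>f x - f y\<bar>"
      by (metis abs_mult abs_triangle_ineq)
    also have "\<dots> \<le> B1 * (C2 * frob m n (x - y)) + B2 * (C1 * frob m n (x - y))"
      using 1 2 xy by (intro add_mono mult_mono) auto
    finally show "\<bar>f x * g x - f y * g y\<bar> \<le> (B1 * C2 + B2 * C1) * frob m n (x - y)"
      by (simp add: algebra_simps)
  qed
  moreover have "\<forall>x\<in>S. \<bar>f x * g x\<bar> \<le> B1 * B2" using 1 2 by (auto simp: abs_mult intro: mult_mono)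
  ultimately show ?thesis unfolding lipS_def by blast
qed

lemma lipS_sum: "finite I \<Longrightarrow> (\<And>i. i \<in> I \<Longrightarrow> lipS m n S (f i)) \<Longrightarrow> lipS m n S (\<lambda>x. \<Sum>i\<in>I. f i x)"
  by (induction I rule: finite_induct) (auto intro: lipS_add lipS_const)

lemma lipS_prod: "finite I \<Longrightarrow> (\<And>i. i \<in> I \<Longrightarrow> lipS m n S (f i)) \<Longrightarrow> lipS m n S (\<lambda>x. \<Prod>i\<in>I. f i x)"
  by (induction I rule: finite_induct) (auto intro: lipS_mult lipS_const)

lemma lip_sin: assumes "mat_lipschitz_on m n S f" shows "lipS m n S (\<lambda>x. sin (f x))"
proof -
  obtain C where C: "C \<ge> 0" "\<And>x y. x \<in> S \<Longrightarrow> y \<in> S \<Longrightarrow> \<bar>f x - f y\<bar> \<le> C * frob m n (x - y)"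
    using assms by (rule mat_lipD) blast
  have "mat_lipschitz_on m n S (\<lambda>x. sin (f x))"
  proof (rule mat_lipI[of _ _ C])
    fix x y assume "x \<in> S" "y \<in> S"
    have "\<bar>sin (f x) - sin (f y)\<bar> = 2 * \<bar>sin ((f x - f y) / 2)\<bar> * \<bar>cos ((f x + f y) / 2)\<bar>"
      unfolding sin_diff_sin by (simp add: abs_mult)
    also have "\<dots> \<le> 2 * \<bar>(f x - f y) / 2\<bar> * 1"
      by (intro mult_mono abs_sin_x_le_abs_x) auto
    also have "\<dots> = \<bar>f x - f y\<bar>" by simp
    also have "\<dots> \<le> C * frob m n (x - y)" using C \<open>x \<in> S\<close> \<open>y \<in> S\<close> by blast
    finally show "\<bar>sin (f x) - sin (f y)\<bar> \<le> C * frob m n (x - y)" .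
  qed
  thus ?thesis unfolding lipS_def by (auto intro!: exI[of _ 1])
qed

lemma lip_cos: assumes "mat_lipschitz_on m n S f" shows "lipS m n S (\<lambda>x. cos (f x))"
proof -
  obtain C where C: "C \<ge> 0" "\<And>x y. x \<in> S \<Longrightarrow> y \<in> S \<Longrightarrow> \<bar>f x - f y\<bar> \<le> C * frob m n (x - y)"
    using assms by (rule mat_lipD) blast
  have "mat_lipschitz_on m n S (\<lambda>x. cos (f x))"
  proof (rule mat_lipI[of _ _ C])
    fix x y assume "x \<in> S" "y \<in> S"
    have "\<bar>cos (f x) - cos (f y)\<bar> = 2 * \<bar>sin ((f x + f y) / 2)\<bar> * \<bar>sin ((f y - f x) / 2)\<bar>"
      unfolding cos_diff_cos by (simp add: abs_mult)
    also have "\<dots> \<le> 2 * 1 * \<bar>(f y - f x) / 2\<bar>"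
      by (intro mult_mono abs_sin_x_le_abs_x) auto
    also have "\<dots> = \<bar>f x - f y\<bar>" by simp
    also have "\<dots> \<le> C * frob m n (x - y)" using C \<open>x \<in> S\<close> \<open>y \<in> S\<close> by blast
    finally show "\<bar>cos (f x) - cos (f y)\<bar> \<le> C * frob m n (x - y)" .
  qed
  thus ?thesis unfolding lipS_def by (auto intro!: exI[of _ 1])
qed

lemma lip_entry: assumes "S \<subseteq> carrier_mat m n" "i < m" "j < n"
  shows "mat_lipschitz_on m n S (\<lambda>x. x $$ (i,j))"
proof (rule mat_lipI[of _ _ 1])
  fix x y assume "x \<in> S" "y \<in> S"
  hence xy: "x \<in> carrier_mat m n" "y \<in> carrier_mat m n" using assms by auto
  hence "x - y \<in> carrier_mat m n" "(x - y) $$ (i,j) = x $$ (i,j) - y $$ (i,j)"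
    using assms by auto
  thus "\<bar>x $$ (i,j) - y $$ (i,j)\<bar> \<le> 1 * frob m n (x - y)" using frob_entry[OF assms(2,3), of "x - y"] by simp
qed

lemma inv_diff_aux: assumes p: "(p::real) > 0" and q: "q > 0"
  shows "(q*q - p*p)/(p*q*(p+q)) = 1/p - 1/q"
proof -
  have "(q*q - p*p)/(p*q*(p+q)) = ((q-p)*(p+q))/((p*q)*(p+q))" by (simp add: algebra_simps)
  also have "\<dots> = (q-p)/(p*q)" using p q by (intro mult_divide_mult_cancel_right) simp
  also have "\<dots> = 1/p - 1/q" using p q by (simp add: field_simps)
  finally show ?thesis .
qed

lemma lipS_inv_sqrt:
  assumes "lipS m n S f" and d: "d > 0" and lb: "\<And>x. x \<in> S \<Longrightarrow> f x \<ge> d"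
  shows "lipS m n S (\<lambda>x. 1 / sqrt (f x))"
proof -
  obtain C B where 1: "C \<ge> 0" "B \<ge> 0" "\<And>x y. x \<in> S \<Longrightarrow> y \<in> S \<Longrightarrow> \<bar>f x - f y\<bar> \<le> C * frob m n (x - y)"
    "\<And>x. x \<in> S \<Longrightarrow> \<bar>f x\<bar> \<le> B" using assms(1) by (rule lipSD) blast
  define K where "K = C / (2 * d * sqrt d)"
  have "mat_lipschitz_on m n S (\<lambda>x. 1 / sqrt (f x))"
  proof (rule mat_lipI[of _ _ K])
    fix x y assume xy: "x \<in> S" "y \<in> S"
    define a where "a = f x" define b where "b = f y"
    have a: "a \<ge> d" and b: "b \<ge> d" using lb xy unfolding a_def b_def by auto
    have sa: "sqrt a \<ge> sqrt d" and sb: "sqrt b \<ge> sqrt d" using a b by auto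
    have sd: "sqrt d > 0" using d by simp
    have "1 / sqrt a - 1 / sqrt b = (b - a) / (sqrt a * sqrt b * (sqrt a + sqrt b))"
    proof -
      have p: "sqrt a > 0" and q: "sqrt b > 0" using sa sb sd by auto
      have "b - a = sqrt b * sqrt b - sqrt a * sqrt a" using a b d by simp
      moreover have "(sqrt b * sqrt b - sqrt a * sqrt a) / (sqrt a * sqrt b * (sqrt a + sqrt b))
          = 1 / sqrt a - 1 / sqrt b"
        using inv_diff_aux[OF p q] .
      ultimately show ?thesis by simp
    qed
    hence "\<bar>1 / sqrt a - 1 / sqrt b\<bar> = \<bar>a - b\<bar> / (sqrt a * sqrt b * (sqrt a + sqrt b))"
      using sa sb sd by (simp add: abs_divide abs_minus_commute)
    also have "\<dots> \<le> \<bar>a - b\<bar> / (sqrt d * sqrt d * (2 * sqrt d))"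
    proof -
      have d1: "sqrt d * sqrt d \<le> sqrt a * sqrt b" using sa sb sd a b by (intro mult_mono) auto
      have d2: "2 * sqrt d \<le> sqrt a + sqrt b" using sa sb by linarith
      have den: "sqrt d * sqrt d * (2 * sqrt d) \<le> sqrt a * sqrt b * (sqrt a + sqrt b)"
        using sd a b d by (intro mult_mono d1 d2) auto
      have pa: "sqrt a > 0" "sqrt b > 0" using sa sb sd by auto
      show ?thesis by (rule divide_left_mono[OF den]) (use sd pa in \<open>auto intro!: mult_pos_pos add_pos_pos\<close>)
    qed
    also have "\<dots> = \<bar>a - b\<bar> / (2 * d * sqrt d)" using d by simp
    also have "\<dots> \<le> C * frob m n (x - y) / (2 * d * sqrt d)"
      using 1(3)[OF xy] d unfolding a_def b_def by (intro divide_right_mono) auto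
    finally show "\<bar>1 / sqrt (f x) - 1 / sqrt (f y)\<bar> \<le> K * frob m n (x - y)"
      unfolding K_def a_def b_def by simp
  qed
  moreover have "\<forall>x\<in>S. \<bar>1 / sqrt (f x)\<bar> \<le> 1 / sqrt d"
  proof
    fix x assume x: "x \<in> S"
    have fx: "f x \<ge> d" using lb x by auto
    hence "sqrt (f x) \<ge> sqrt d" by simp
    moreover have "sqrt d > 0" using d by simp
    ultimately show "\<bar>1 / sqrt (f x)\<bar> \<le> 1 / sqrt d"
      by (simp add: frac_le)
  qed
  ultimately show ?thesis unfolding lipS_def by blast
qed

lemma frob_le_entries:
  assumes M: "M \<in> carrier_mat p q" and b: "\<And>i j. i < p \<Longrightarrow> j < q \<Longrightarrow> \<bar>M $$ (i,j)\<bar> \<le> e"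
  shows "frob p q M \<le> sqrt (real p * real q) * e"
proof -
  have e: "e \<ge> 0" if "p > 0" "q > 0" using b[of 0 0] that by auto
  have "(\<Sum>i<p. \<Sum>j<q. (M $$ (i,j))^2) \<le> (\<Sum>i<p. \<Sum>j<q. e^2)"
  proof (intro sum_mono)
    fix i j assume "i \<in> {..<p}" "j \<in> {..<q}"
    hence "\<bar>M $$ (i,j)\<bar> \<le> e" using b by auto
    thus "(M $$ (i,j))^2 \<le> e^2" by (metis abs_ge_zero order_trans power2_abs power_mono)
  qed
  also have "\<dots> = (sqrt (real p * real q) * e)^2" by (simp add: power_mult_distrib)
  finally have "(\<Sum>i<p. \<Sum>j<q. (M $$ (i,j))^2) \<le> (sqrt (real p * real q) * e)^2" .
  hence "frob p q M \<le> \<bar>sqrt (real p * real q) * e\<bar>" unfolding frob_def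
    by (metis real_sqrt_abs real_sqrt_le_mono)
  moreover have "\<bar>sqrt (real p * real q) * e\<bar> = sqrt (real p * real q) * e"
  proof (cases "p > 0 \<and> q > 0")
    case True thus ?thesis using e by auto
  next
    case False thus ?thesis by auto
  qed
  ultimately show ?thesis by simp
qed

lemma frob_lip_entries:
  assumes F: "\<And>x. x \<in> S \<Longrightarrow> F x \<in> carrier_mat p q"
    and ent: "\<And>i j. i < p \<Longrightarrow> j < q \<Longrightarrow> mat_lipschitz_on m n S (\<lambda>x. F x $$ (i,j))"
  shows "\<exists>C. \<forall>x\<in>S. \<forall>y\<in>S. frob p q (F x - F y) \<le> C * frob m n (x - y)"
proof -
  have "\<forall>ij\<in>{..<p}\<times>{..<q}. \<exists>C. C \<ge> 0 \<and> (\<forall>x\<in>S. \<forall>y\<in>S.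
      \<bar>F x $$ ij - F y $$ ij\<bar> \<le> C * frob m n (x - y))"
  proof
    fix ij assume "ij \<in> {..<p}\<times>{..<q}"
    then obtain i j where ij: "ij = (i,j)" "i < p" "j < q" by auto
    obtain C where "C \<ge> 0" "\<And>x y. x \<in> S \<Longrightarrow> y \<in> S \<Longrightarrow> \<bar>F x $$ (i,j) - F y $$ (i,j)\<bar> \<le> C * frob m n (x - y)"
      using ent[OF ij(2,3)] by (rule mat_lipD) blast
    thus "\<exists>C. C \<ge> 0 \<and> (\<forall>x\<in>S. \<forall>y\<in>S. \<bar>F x $$ ij - F y $$ ij\<bar> \<le> C * frob m n (x - y))"
      unfolding ij by blast
  qed
  then obtain Cf where Cf: "\<And>ij. ij \<in> {..<p}\<times>{..<q} \<Longrightarrow> Cf ij \<ge> 0 \<and> (\<forall>x\<in>S. \<forall>y\<in>S.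
      \<bar>F x $$ ij - F y $$ ij\<bar> \<le> Cf ij * frob m n (x - y))"
    by metis
  define K where "K = (\<Sum>ij\<in>{..<p}\<times>{..<q}. Cf ij)"
  have CK: "Cf ij \<le> K" if "ij \<in> {..<p}\<times>{..<q}" for ij
    unfolding K_def using that Cf by (intro member_le_sum) auto
  show ?thesis
  proof (intro exI ballI)
    fix x y assume xy: "x \<in> S" "y \<in> S"
    have "frob p q (F x - F y) \<le> sqrt (real p * real q) * (K * frob m n (x - y))"
    proof (rule frob_le_entries)
      show "F x - F y \<in> carrier_mat p q" using F xy by (auto intro: minus_carrier_mat)
      fix i j assume ij: "i < p" "j < q"
      have "(F x - F y) $$ (i,j) = F x $$ (i,j) - F y $$ (i,j)" using F[OF xy(1)] F[OF xy(2)] ij by auto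
      also have "\<bar>\<dots>\<bar> \<le> Cf (i,j) * frob m n (x - y)" using Cf[of "(i,j)"] ij xy by auto
      also have "\<dots> \<le> K * frob m n (x - y)" using CK[of "(i,j)"] ij frob_nonneg
        by (intro mult_right_mono) auto
      finally show "\<bar>(F x - F y) $$ (i,j)\<bar> \<le> K * frob m n (x - y)" .
    qed
    thus "frob p q (F x - F y) \<le> (sqrt (real p * real q) * K) * frob m n (x - y)" by (simp add: mult_ac)
  qed
qed

lemma comp_lip:
  assumes g: "mat_lipschitz_on p q (carrier_mat p q) g"
    and F: "\<And>x. x \<in> S \<Longrightarrow> F x \<in> carrier_mat p q"
    and C: "\<forall>x\<in>S. \<forall>y\<in>S. frob p q (F x - F y) \<le> C * frob m n (x - y)"
  shows "mat_lipschitz_on m n S (\<lambda>x. g (F x))"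
proof -
  obtain D where D: "D \<ge> 0" "\<And>x y. x \<in> carrier_mat p q \<Longrightarrow> y \<in> carrier_mat p q \<Longrightarrow> \<bar>g x - g y\<bar> \<le> D * frob p q (x - y)"
    using g by (rule mat_lipD) blast
  show ?thesis
  proof (rule mat_lipI[of _ _ "D * C"])
    fix x y assume xy: "x \<in> S" "y \<in> S"
    have "\<bar>g (F x) - g (F y)\<bar> \<le> D * frob p q (F x - F y)" using D F xy by auto
    also have "\<dots> \<le> D * (C * frob m n (x - y))" using C xy D by (intro mult_left_mono) auto
    finally show "\<bar>g (F x) - g (F y)\<bar> \<le> D * C * frob m n (x - y)" by (simp add: mult_ac)
  qed
qed

definition box :: "nat \<Rightarrow> nat \<Rightarrow> real mat set" where
  "box m n = {x \<in> carrier_mat m n. \<forall>i<m. \<forall>j<n. 0 \<le> x $$ (i,j) \<and> x $$ (i,j) \<le> pi}"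

lemma lip_box_lipS:
  assumes S: "S \<subseteq> box m n" and f: "mat_lipschitz_on m n S f"
  shows "lipS m n S f"
proof (cases "S = {}")
  case True thus ?thesis using f unfolding lipS_def by auto
next
  case False
  then obtain x0 where x0: "x0 \<in> S" by auto
  obtain C where C: "C \<ge> 0" "\<And>x y. x \<in> S \<Longrightarrow> y \<in> S \<Longrightarrow> \<bar>f x - f y\<bar> \<le> C * frob m n (x - y)"
    using f by (rule mat_lipD) blast
  have "\<forall>x\<in>S. \<bar>f x\<bar> \<le> \<bar>f x0\<bar> + C * (sqrt (real m * real n) * pi)"
  proof
    fix x assume x: "x \<in> S"
    have fr: "frob m n (x - x0) \<le> sqrt (real m * real n) * pi"
    proof (rule frob_le_entries)
      show "x - x0 \<in> carrier_mat m n" using S x x0 by (auto simp: box_def intro: minus_carrier_mat)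
      fix i j assume ij: "i < m" "j < n"
      have "(x - x0) $$ (i,j) = x $$ (i,j) - x0 $$ (i,j)" using S x x0 ij by (auto simp: box_def)
      moreover have "0 \<le> x $$ (i,j)" "x $$ (i,j) \<le> pi" "0 \<le> x0 $$ (i,j)" "x0 $$ (i,j) \<le> pi"
        using S x x0 ij by (auto simp: box_def)
      ultimately show "\<bar>(x - x0) $$ (i,j)\<bar> \<le> pi" by auto
    qed
    have "\<bar>f x\<bar> \<le> \<bar>f x0\<bar> + \<bar>f x - f x0\<bar>" by linarith
    also have "\<dots> \<le> \<bar>f x0\<bar> + C * frob m n (x - x0)" using C x x0 by auto
    also have "\<dots> \<le> \<bar>f x0\<bar> + C * (sqrt (real m * real n) * pi)" using fr C by (intro add_left_mono mult_left_mono) auto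
    finally show "\<bar>f x\<bar> \<le> \<bar>f x0\<bar> + C * (sqrt (real m * real n) * pi)" .
  qed
  thus ?thesis using f unfolding lipS_def by blast
qed

lemma cont_coord: "continuous_on S (\<lambda>x::('a \<Rightarrow> real). x i)"
  by (rule continuous_on_subset[OF continuous_on_product_coordinates]) auto

lemma box_pos_min:
  assumes g: "mat_lipschitz_on m n (carrier_mat m n) g"
    and pos: "\<And>x. x \<in> box m n \<Longrightarrow> g x > 0"
  shows "\<exists>\<delta>>0. \<forall>x\<in>box m n. g x \<ge> \<delta>"
proof -
  define \<phi> :: "(nat \<times> nat \<Rightarrow> real) \<Rightarrow> real mat" where "\<phi> f = mat m n (\<lambda>(i,j). f (i,j))" for f
  define K where "K = PiE UNIV (\<lambda>(i,j). if i < m \<and> j < n then {0..pi} else {0::real})"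
  have "compactin (product_topology (\<lambda>_. euclideanreal) UNIV) K"
    unfolding K_def by (subst compactin_PiE) auto
  hence cK: "compact K" unfolding euclidean_product_topology by (simp add: compactin_euclidean_iff)
  have neK: "K \<noteq> {}" unfolding K_def by (auto simp: PiE_eq_empty_iff)
  obtain C where C: "C \<ge> 0" "\<And>x y. x \<in> carrier_mat m n \<Longrightarrow> y \<in> carrier_mat m n \<Longrightarrow> \<bar>g x - g y\<bar> \<le> C * frob m n (x - y)"
    using g by (rule mat_lipD) blast
  define h where "h f = g (\<phi> f)" for f
  have cont: "continuous_on UNIV h"
  unfolding continuous_on_def
  proof (rule ballI)
    fix x0 :: "nat \<times> nat \<Rightarrow> real"
    define r where "r f = C * sqrt (\<Sum>i<m. \<Sum>j<n. (f (i,j) - x0 (i,j))^2)" for f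
    have "continuous_on UNIV r" unfolding r_def by (intro continuous_intros cont_coord)
    hence "(r \<longlongrightarrow> r x0) (at x0 within UNIV)" unfolding continuous_on_def by blast
    hence rlim: "(r \<longlongrightarrow> 0) (at x0 within UNIV)" unfolding r_def by simp
    have le: "norm (h f - h x0) \<le> r f" for f
    proof -
      have "frob m n (\<phi> f - \<phi> x0) = sqrt (\<Sum>i<m. \<Sum>j<n. (f (i,j) - x0 (i,j))^2)"
        unfolding frob_def \<phi>_def by (intro arg_cong[where f=sqrt] sum.cong) auto
      thus ?thesis unfolding h_def r_def using C(2)[of "\<phi> f" "\<phi> x0"] by (simp add: \<phi>_def)
    qed
    have "((\<lambda>f. h f - h x0) \<longlongrightarrow> 0) (at x0 within UNIV)"
      by (rule tendsto_0_le[OF rlim, of _ 1]) (use le in \<open>auto intro!: always_eventually intro: order_trans[OF _ abs_ge_self]\<close>)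
    thus "(h \<longlongrightarrow> h x0) (at x0 within UNIV)" by (rule LIM_zero_cancel)
  qed
  obtain f0 where f0: "f0 \<in> K" "\<And>f. f \<in> K \<Longrightarrow> h f0 \<le> h f"
    using continuous_attains_inf[OF cK neK continuous_on_subset[OF cont]] by auto
  have phiK: "\<phi> f \<in> box m n" if "f \<in> K" for f
  proof -
    have "\<And>i j. i < m \<Longrightarrow> j < n \<Longrightarrow> f (i,j) \<in> {0..pi}"
      using that unfolding K_def by (auto simp: PiE_iff split: if_splits)
    thus ?thesis unfolding box_def \<phi>_def by auto
  qed
  show ?thesis
  proof (intro exI conjI ballI)
    show "h f0 > 0" unfolding h_def using pos phiK f0 by auto
    fix x assume x: "x \<in> box m n"
    define f where "f = (\<lambda>(i,j). if i < m \<and> j < n then x $$ (i,j) else 0)"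
    have fK: "f \<in> K" using x unfolding K_def f_def box_def by (auto simp: PiE_iff)
    have "\<phi> f = x" using x unfolding \<phi>_def f_def box_def by (auto intro!: eq_matI)
    thus "h f0 \<le> g x" using f0(2)[OF fK] unfolding h_def by simp
  qed
qed

lemma mat_lip_add: "mat_lipschitz_on m n S f \<Longrightarrow> mat_lipschitz_on m n S g \<Longrightarrow>
  mat_lipschitz_on m n S (\<lambda>x. f x + g x)"
proof -
  assume f: "mat_lipschitz_on m n S f" and g: "mat_lipschitz_on m n S g"
  obtain C1 where 1: "\<And>x y. x \<in> S \<Longrightarrow> y \<in> S \<Longrightarrow> \<bar>f x - f y\<bar> \<le> C1 * frob m n (x - y)"
    using f by (rule mat_lipD) blast
  obtain C2 where 2: "\<And>x y. x \<in> S \<Longrightarrow> y \<in> S \<Longrightarrow> \<bar>g x - g y\<bar> \<le> C2 * frob m n (x - y)"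
    using g by (rule mat_lipD) blast
  show ?thesis
  proof (rule mat_lipI[of _ _ "C1 + C2"])
    fix x y assume "x \<in> S" "y \<in> S"
    hence "\<bar>f x - f y\<bar> + \<bar>g x - g y\<bar> \<le> C1 * frob m n (x - y) + C2 * frob m n (x - y)"
      using 1 2 by (intro add_mono) auto
    thus "\<bar>f x + g x - (f y + g y)\<bar> \<le> (C1 + C2) * frob m n (x - y)" by (simp add: algebra_simps)
  qed
qed

lemma mat_lip_sum: "finite I \<Longrightarrow> (\<And>i. i \<in> I \<Longrightarrow> mat_lipschitz_on m n S (f i)) \<Longrightarrow>
  mat_lipschitz_on m n S (\<lambda>x. \<Sum>i\<in>I. f i x)"
  by (induction I rule: finite_induct) (auto intro: mat_lip_add mat_lipI[of _ _ 0] simp: frob_nonneg)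

lemma V_entry_lip:
  assumes S: "S \<subseteq> carrier_mat (d-1) l" and k: "k < d" and i: "i < l"
  shows "lipS (d-1) l S (\<lambda>\<theta>. Vmat d l \<theta> $$ (k,i))"
proof -
  have eq: "Vmat d l \<theta> $$ (k,i) = (if k < d - 1 then cos (\<theta> $$ (k,i)) * (\<Prod>r<k. sin (\<theta> $$ (r,i)))
      else (\<Prod>r<d - 1. sin (\<theta> $$ (r,i))))" for \<theta>
    using k i by (simp add: Vmat_def)
  show ?thesis
  proof (cases "k < d - 1")
    case True
    have "lipS (d-1) l S (\<lambda>\<theta>. cos (\<theta> $$ (k,i)) * (\<Prod>r<k. sin (\<theta> $$ (r,i))))"
      using S True i by (intro lipS_mult lip_cos lipS_prod lip_sin lip_entry) auto
    thus ?thesis unfolding eq using True by simp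
  next
    case False
    have "lipS (d-1) l S (\<lambda>\<theta>. (\<Prod>r<d - 1. sin (\<theta> $$ (r,i))))"
      using S i by (intro lipS_prod lip_sin lip_entry) auto
    thus ?thesis unfolding eq using False by simp
  qed
qed

lemma Pmat_carrier: "X \<in> carrier_mat d N \<Longrightarrow> Pmat d l X \<theta> \<in> carrier_mat l N"
  unfolding Pmat_def Vmat_def by auto

lemma P_entry_lip:
  assumes S: "S \<subseteq> carrier_mat (d-1) l" and X: "X \<in> carrier_mat d N" and i: "i < l" and j: "j < N"
  shows "lipS (d-1) l S (\<lambda>\<theta>. Pmat d l X \<theta> $$ (i,j))"
proof -
  have eq: "Pmat d l X \<theta> $$ (i,j) = (\<Sum>k\<in>{0..<d}. Vmat d l \<theta> $$ (k,i) * X $$ (k,j))" for \<theta>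
    using X i j by (simp add: Pmat_def Vmat_def scalar_prod_def)
  show ?thesis unfolding eq
    by (intro lipS_sum lipS_mult V_entry_lip[OF S] lipS_const) (use i in auto)
qed

lemma P_frob:
  assumes S: "S \<subseteq> carrier_mat (d-1) l" and X: "X \<in> carrier_mat d N"
  shows "\<exists>C. \<forall>x\<in>S. \<forall>y\<in>S. frob l N (Pmat d l X x - Pmat d l X y) \<le> C * frob (d-1) l (x - y)"
  by (rule frob_lip_entries) (use Pmat_carrier[OF X] P_entry_lip[OF S X] in \<open>auto simp: lipS_def\<close>)

lemma s_lip:
  assumes S: "S \<subseteq> carrier_mat (d-1) l" and X: "X \<in> carrier_mat d N"
    and lip: "mat_lipschitz_on l N (carrier_mat l N) g"
  shows "mat_lipschitz_on (d-1) l S (\<lambda>\<theta>. g (Pmat d l X \<theta>))"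
proof -
  obtain C where "\<forall>x\<in>S. \<forall>y\<in>S. frob l N (Pmat d l X x - Pmat d l X y) \<le> C * frob (d-1) l (x - y)"
    using P_frob[OF S X] by blast
  thus ?thesis by (intro comp_lip[OF lip]) (auto simp: Pmat_carrier[OF X])
qed

lemma Theta_box: "Theta d l \<subseteq> box (d-1) l"
proof
  fix x assume "x \<in> Theta d l"
  hence c: "x \<in> carrier_mat (d-1) l" and h: "\<forall>i<d-1. \<forall>j<l. 0 \<le> x $$ (i,j) \<and> x $$ (i,j) < pi"
    unfolding Theta_def by auto
  show "x \<in> box (d-1) l" unfolding box_def using c h by (auto simp: less_imp_le)
qed

lemma Theta_carrier: "Theta d l \<subseteq> carrier_mat (d-1) l"
  unfolding Theta_def by auto

lemma box_carrier: "box m n \<subseteq> carrier_mat m n"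
  unfolding box_def by auto

lemma diag_sandwich:
  fixes L :: "real mat" and c :: "nat \<Rightarrow> real"
  assumes L: "L \<in> carrier_mat n n" and i: "i < n" and j: "j < n"
  shows "(mat n n (\<lambda>(i,j). if i = j then c i else 0) * L * mat n n (\<lambda>(i,j). if i = j then c i else 0)) $$ (i,j)
     = c i * L $$ (i,j) * c j"
proof -
  let ?D = "mat n n (\<lambda>(i,j). if i = j then c i else (0::real))"
  have DL: "(?D * L) $$ (i,k) = c i * L $$ (i,k)" if k: "k < n" for k
  proof -
    have "(?D * L) $$ (i,k) = (\<Sum>r\<in>{0..<n}. (if i = r then c i else 0) * L $$ (r,k))"
      using L i k by (simp add: scalar_prod_def)
    also have "\<dots> = (\<Sum>r\<in>{0..<n}. if r = i then c i * L $$ (i,k) else 0)" by (intro sum.cong) auto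
    also have "\<dots> = c i * L $$ (i,k)" using i by simp
    finally show ?thesis .
  qed
  define M where "M = ?D * L"
  have M: "M \<in> carrier_mat n n" unfolding M_def by (rule mult_carrier_mat[OF _ L]) simp
  have "(?D * L * ?D) $$ (i,j) = (M * ?D) $$ (i,j)" unfolding M_def ..
  also have "\<dots> = (\<Sum>r\<in>{0..<n}. M $$ (i,r) * (if r = j then c r else 0))"
    using M i j by (simp add: scalar_prod_def)
  also have "\<dots> = (\<Sum>r\<in>{0..<n}. if r = j then M $$ (i,j) * c j else 0)" by (intro sum.cong) auto
  also have "\<dots> = c i * L $$ (i,j) * c j" using j DL[OF j] unfolding M_def by simp
  finally show ?thesis .
qed

context
  fixes d l N :: nat and X :: "real mat" and s :: "real mat \<Rightarrow> nat \<Rightarrow> nat \<Rightarrow> real"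
  assumes X: "X \<in> carrier_mat d N"
    and pos: "\<And>P i j. P \<in> carrier_mat l N \<Longrightarrow> i < N \<Longrightarrow> j < N \<Longrightarrow> s P i j > 0"
    and sym: "\<And>P i j. P \<in> carrier_mat l N \<Longrightarrow> i < N \<Longrightarrow> j < N \<Longrightarrow> s P i j = s P j i"
    and lip: "\<And>i j. i < N \<Longrightarrow> j < N \<Longrightarrow> mat_lipschitz_on l N (carrier_mat l N) (\<lambda>P. s P i j)"
begin

abbreviation "Aff \<theta> \<equiv> affinity N s (Pmat d l X \<theta>)"

lemma Aff_carrier: "Aff \<theta> \<in> carrier_mat N N"
  unfolding affinity_def by simp

lemma Aff_entry: "i < N \<Longrightarrow> j < N \<Longrightarrow> Aff \<theta> $$ (i,j) = s (Pmat d l X \<theta>) i j"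
  unfolding affinity_def by simp

lemma deg_eq: "i < N \<Longrightarrow> degree (Aff \<theta>) i = (\<Sum>j<N. s (Pmat d l X \<theta>) i j)"
  unfolding degree_def using Aff_carrier[of \<theta>] by (auto intro!: sum.cong simp: Aff_entry)

lemma deg_pos: "i < N \<Longrightarrow> degree (Aff \<theta>) i > 0"
  unfolding deg_eq by (intro sum_pos) (auto intro: pos Pmat_carrier[OF X])

lemma L_entry: "i < N \<Longrightarrow> j < N \<Longrightarrow> laplacian (Aff \<theta>) $$ (i,j) =
    (if i = j then degree (Aff \<theta>) i else 0) - s (Pmat d l X \<theta>) i j"
  using Aff_carrier[of \<theta>] by (simp add: laplacian_def degree_mat_def Aff_entry)

lemma L_carrier: "laplacian (Aff \<theta>) \<in> carrier_mat N N"
  using Aff_carrier[of \<theta>] unfolding laplacian_def degree_mat_def by (auto intro: minus_carrier_mat)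

lemma Ln_entry: "i < N \<Longrightarrow> j < N \<Longrightarrow> norm_laplacian (Aff \<theta>) $$ (i,j) =
    1 / sqrt (degree (Aff \<theta>) i) * laplacian (Aff \<theta>) $$ (i,j) * (1 / sqrt (degree (Aff \<theta>) j))"
  unfolding norm_laplacian_def Let_def using Aff_carrier[of \<theta>]
    diag_sandwich[OF L_carrier, of i j "\<lambda>i. 1 / sqrt (degree (Aff \<theta>) i)"] by simp

lemma Ln_carrier: "norm_laplacian (Aff \<theta>) \<in> carrier_mat N N"
  unfolding norm_laplacian_def Let_def using Aff_carrier[of \<theta>] L_carrier[of \<theta>] by auto

lemma L_symm: "symm N (laplacian (Aff \<theta>))"
  unfolding symm_def using sym[OF Pmat_carrier[OF X]] by (auto simp: L_entry)

lemma Ln_symm: "symm N (norm_laplacian (Aff \<theta>))"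
  unfolding symm_def using L_symm[of \<theta>] by (auto simp: Ln_entry symm_def)

lemma s_lipS: "i < N \<Longrightarrow> j < N \<Longrightarrow> lipS (d-1) l (Theta d l) (\<lambda>\<theta>. s (Pmat d l X \<theta>) i j)"
  by (rule lip_box_lipS[OF Theta_box], rule s_lip[OF Theta_carrier X lip])

lemma deg_lipS: "i < N \<Longrightarrow> lipS (d-1) l (Theta d l) (\<lambda>\<theta>. degree (Aff \<theta>) i)"
  by (simp only: deg_eq) (intro lipS_sum s_lipS, auto)

lemma L_lipS: "i < N \<Longrightarrow> j < N \<Longrightarrow> lipS (d-1) l (Theta d l) (\<lambda>\<theta>. laplacian (Aff \<theta>) $$ (i,j))"
proof -
  assume ij: "i < N" "j < N"
  have "lipS (d-1) l (Theta d l) (\<lambda>\<theta>. if i = j then degree (Aff \<theta>) i else 0)"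
    by (cases "i = j") (use ij deg_lipS[of j] in \<open>auto intro: lipS_const\<close>)
  hence "lipS (d-1) l (Theta d l) (\<lambda>\<theta>. (if i = j then degree (Aff \<theta>) i else 0) - s (Pmat d l X \<theta>) i j)"
    using ij by (intro lipS_diff s_lipS) auto
  thus ?thesis using ij by (simp add: L_entry)
qed

lemma deg_lower: "i < N \<Longrightarrow> \<exists>\<delta>>0. \<forall>\<theta>\<in>Theta d l. degree (Aff \<theta>) i \<ge> \<delta>"
proof -
  assume i: "i < N"
  have g: "mat_lipschitz_on (d-1) l (carrier_mat (d-1) l) (\<lambda>\<theta>. \<Sum>j<N. s (Pmat d l X \<theta>) i j)"
    using i by (intro mat_lip_sum s_lip[OF _ X lip]) auto
  have "\<exists>\<delta>>0. \<forall>x\<in>box (d-1) l. (\<Sum>j<N. s (Pmat d l X x) i j) \<ge> \<delta>"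
    by (rule box_pos_min[OF g]) (use i in \<open>auto intro!: sum_pos pos Pmat_carrier[OF X]\<close>)
  then obtain \<delta> where "\<delta> > 0" and \<delta>: "\<forall>x\<in>box (d-1) l. (\<Sum>j<N. s (Pmat d l X x) i j) \<ge> \<delta>" by blast
  show ?thesis
  proof (intro exI conjI ballI)
    show "\<delta> > 0" by fact
    fix \<theta> assume "\<theta> \<in> Theta d l"
    hence "\<theta> \<in> box (d-1) l" using Theta_box by blast
    thus "\<delta> \<le> degree (Aff \<theta>) i" using \<delta> deg_eq[OF i] by simp
  qed
qed

end

lemma eig_lip_gen:
  assumes N2: "N \<ge> 2" and F: "\<And>x. F x \<in> carrier_mat N N" and sF: "\<And>x. symm N (F x)"
    and ent: "\<And>i j. i < N \<Longrightarrow> j < N \<Longrightarrow> lipS m n S (\<lambda>x. F x $$ (i,j))"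
  shows "mat_lipschitz_on m n S (\<lambda>x. eig_lambda 2 (F x))"
proof -
  have "\<exists>C. \<forall>x\<in>S. \<forall>y\<in>S. frob N N (F x - F y) \<le> C * frob m n (x - y)"
  proof (rule frob_lip_entries)
    show "\<And>x. x \<in> S \<Longrightarrow> F x \<in> carrier_mat N N" using F by blast
    show "\<And>i j. i < N \<Longrightarrow> j < N \<Longrightarrow> mat_lipschitz_on m n S (\<lambda>x. F x $$ (i,j))"
      using ent unfolding lipS_def by blast
  qed
  then obtain C where C: "\<forall>x\<in>S. \<forall>y\<in>S. frob N N (F x - F y) \<le> C * frob m n (x - y)" by blast
  show ?thesis
  proof (rule mat_lipI[of _ _ "real N * C"])
    fix x y assume xy: "x \<in> S" "y \<in> S"
    have "\<bar>eig_lambda 2 (F x) - eig_lambda 2 (F y)\<bar> \<le> real N * frob N N (F x - F y)"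
      by (rule weyl2_abs[OF F F sF sF N2])
    also have "\<dots> \<le> real N * (C * frob m n (x - y))" using C xy by (intro mult_left_mono) auto
    finally show "\<bar>eig_lambda 2 (F x) - eig_lambda 2 (F y)\<bar> \<le> real N * C * frob m n (x - y)"
      by (simp add: mult_ac)
  qed
qed

context
  fixes d l N :: nat and X :: "real mat" and s :: "real mat \<Rightarrow> nat \<Rightarrow> nat \<Rightarrow> real"
  assumes X: "X \<in> carrier_mat d N"
    and pos: "\<And>P i j. P \<in> carrier_mat l N \<Longrightarrow> i < N \<Longrightarrow> j < N \<Longrightarrow> s P i j > 0"
    and sym: "\<And>P i j. P \<in> carrier_mat l N \<Longrightarrow> i < N \<Longrightarrow> j < N \<Longrightarrow> s P i j = s P j i"
    and lip: "\<And>i j. i < N \<Longrightarrow> j < N \<Longrightarrow> mat_lipschitz_on l N (carrier_mat l N) (\<lambda>P. s P i j)"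
begin

lemma inv_deg_lipS: "i < N \<Longrightarrow> lipS (d-1) l (Theta d l) (\<lambda>\<theta>. 1 / sqrt (degree (affinity N s (Pmat d l X \<theta>)) i))"
proof -
  assume i: "i < N"
  have ex: "\<exists>\<delta>>0. \<forall>\<theta>\<in>Theta d l. degree (affinity N s (Pmat d l X \<theta>)) i \<ge> \<delta>"
    by (rule deg_lower[OF X pos sym lip i])
  then obtain \<delta> where d0: "\<delta> > 0" and dl: "\<And>\<theta>. \<theta> \<in> Theta d l \<Longrightarrow> degree (affinity N s (Pmat d l X \<theta>)) i \<ge> \<delta>"
    by blast
  show ?thesis by (rule lipS_inv_sqrt[OF deg_lipS[OF X pos sym lip i] d0 dl])
qed


lemma Ln_lipS: "i < N \<Longrightarrow> j < N \<Longrightarrow>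
  lipS (d-1) l (Theta d l) (\<lambda>\<theta>. norm_laplacian (affinity N s (Pmat d l X \<theta>)) $$ (i,j))"
proof -
  assume ij: "i < N" "j < N"
  have "lipS (d-1) l (Theta d l) (\<lambda>\<theta>. 1 / sqrt (degree (affinity N s (Pmat d l X \<theta>)) i)
     * laplacian (affinity N s (Pmat d l X \<theta>)) $$ (i,j) * (1 / sqrt (degree (affinity N s (Pmat d l X \<theta>)) j)))"
    by (rule lipS_mult[OF lipS_mult[OF inv_deg_lipS[OF ij(1)] L_lipS[OF X pos sym lip ij]] inv_deg_lipS[OF ij(2)]])
  thus ?thesis by (subst Ln_entry[OF X pos sym lip ij])
qed

lemma main:
  assumes N2: "N \<ge> 2"
  shows "mat_lipschitz_on (d - 1) l (Theta d l)
           (\<lambda>\<theta>. eig_lambda 2 (laplacian (affinity N s (Pmat d l X \<theta>))))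
       \<and> mat_lipschitz_on (d - 1) l (Theta d l)
           (\<lambda>\<theta>. eig_lambda 2 (norm_laplacian (affinity N s (Pmat d l X \<theta>))))"
proof
  show "mat_lipschitz_on (d - 1) l (Theta d l)
           (\<lambda>\<theta>. eig_lambda 2 (laplacian (affinity N s (Pmat d l X \<theta>))))"
    by (rule eig_lip_gen[OF N2 L_carrier[OF X pos sym lip] L_symm[OF X pos sym lip] L_lipS[OF X pos sym lip]])
  show "mat_lipschitz_on (d - 1) l (Theta d l)
           (\<lambda>\<theta>. eig_lambda 2 (norm_laplacian (affinity N s (Pmat d l X \<theta>))))"
    by (rule eig_lip_gen[OF N2 Ln_carrier[OF X pos sym lip] Ln_symm[OF X pos sym lip] Ln_lipS])
qed

end

theorem lemma1:
  fixes d l N :: nat and X :: "real mat" and s :: "real mat \<Rightarrow> nat \<Rightarrow> nat \<Rightarrow> real"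
  assumes "d \<ge> 1" and "N \<ge> 2"
    and "X \<in> carrier_mat d N"
    and pos: "\<And>P i j. P \<in> carrier_mat l N \<Longrightarrow> i < N \<Longrightarrow> j < N \<Longrightarrow> s P i j > 0"
    and sym: "\<And>P i j. P \<in> carrier_mat l N \<Longrightarrow> i < N \<Longrightarrow> j < N \<Longrightarrow> s P i j = s P j i"
    and lip: "\<And>i j. i < N \<Longrightarrow> j < N \<Longrightarrow> mat_lipschitz_on l N (carrier_mat l N) (\<lambda>P. s P i j)"
  shows "mat_lipschitz_on (d - 1) l (Theta d l)
           (\<lambda>\<theta>. eig_lambda 2 (laplacian (affinity N s (Pmat d l X \<theta>))))
       \<and> mat_lipschitz_on (d - 1) l (Theta d l)
           (\<lambda>\<theta>. eig_lambda 2 (norm_laplacian (affinity N s (Pmat d l X \<theta>))))"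
  by (rule main[OF assms(3) pos sym lip assms(2)])

end
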